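(* If a persistence module $\mathbb{V}$ contains a nonzero right-closed point, then $\mathbb{V}$ is not locally compact.
   Context: A persistence module is a functor $\mathbb{V}$ from the poset $[0,\infty)$ to $\mathbb{Q}$-vector spaces. An element $v_r\in\mathbb{V}(r)$ is a right-closed point if $\mathbb{V}(r\le r+\epsilon)(v_r)=0$ for all $\epsilon>0$. A persistence module is compact if it is a compact object of the category of persistence modules (equivalently a finite direct sum of interval modules $\mathbb{I}_{[s,t)}$, where $\mathbb{I}_{[s,t)}$ is $\mathbb{Q}$ on $[s,t)$ with identity structure maps and $0$ elsewhere). $\mathbb{V}$ is locally compact if every element $v\in\mathbb{V}(r)$ lies in some compact submodule of $\mathbb{V}$. *)

theory Defs
  imports Complex_Main "HOL-Library.Extended_Real"
begin

text \<open>A persistence module over [0,oo) with values in Q-vector spaces.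
  All spaces V(r) live inside one ambient type 'a (no loss of generality:
  take 'a to be the disjoint union of the spaces), each with its own
  carrier set and its own vector-space operations.  Only indices r \<ge> 0
  are constrained.\<close>

record 'a pmod =
  pm_car   :: "real \<Rightarrow> 'a set"
  pm_add   :: "real \<Rightarrow> 'a \<Rightarrow> 'a \<Rightarrow> 'a"
  pm_zero  :: "real \<Rightarrow> 'a"
  pm_smult :: "real \<Rightarrow> rat \<Rightarrow> 'a \<Rightarrow> 'a"
  pm_map   :: "real \<Rightarrow> real \<Rightarrow> 'a \<Rightarrow> 'a"

definition qvs :: "'a set \<Rightarrow> ('a \<Rightarrow> 'a \<Rightarrow> 'a) \<Rightarrow> 'a \<Rightarrow> (rat \<Rightarrow> 'a \<Rightarrow> 'a) \<Rightarrow> bool" where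
  "qvs C add z sm \<longleftrightarrow>
     z \<in> C \<and>
     (\<forall>x\<in>C. \<forall>y\<in>C. add x y \<in> C) \<and>
     (\<forall>a. \<forall>x\<in>C. sm a x \<in> C) \<and>
     (\<forall>x\<in>C. \<forall>y\<in>C. \<forall>w\<in>C. add (add x y) w = add x (add y w)) \<and>
     (\<forall>x\<in>C. \<forall>y\<in>C. add x y = add y x) \<and>
     (\<forall>x\<in>C. add z x = x) \<and>
     (\<forall>x\<in>C. \<exists>y\<in>C. add x y = z) \<and>
     (\<forall>a b. \<forall>x\<in>C. sm (a + b) x = add (sm a x) (sm b x)) \<and>
     (\<forall>a. \<forall>x\<in>C. \<forall>y\<in>C. sm a (add x y) = add (sm a x) (sm a y)) \<and>
     (\<forall>a b. \<forall>x\<in>C. sm (a * b) x = sm a (sm b x)) \<and>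
     (\<forall>x\<in>C. sm 1 x = x)"

definition is_pmod :: "'a pmod \<Rightarrow> bool" where
  "is_pmod V \<longleftrightarrow>
     (\<forall>r\<ge>0. qvs (pm_car V r) (pm_add V r) (pm_zero V r) (pm_smult V r)) \<and>
     (\<forall>r s. 0 \<le> r \<and> r \<le> s \<longrightarrow>
        (\<forall>x\<in>pm_car V r. pm_map V r s x \<in> pm_car V s) \<and>
        (\<forall>x\<in>pm_car V r. \<forall>y\<in>pm_car V r.
            pm_map V r s (pm_add V r x y) = pm_add V s (pm_map V r s x) (pm_map V r s y)) \<and>
        (\<forall>a. \<forall>x\<in>pm_car V r. pm_map V r s (pm_smult V r a x) = pm_smult V s a (pm_map V r s x))) \<and>
     (\<forall>r\<ge>0. \<forall>x\<in>pm_car V r. pm_map V r r x = x) \<and>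
     (\<forall>r s t. 0 \<le> r \<and> r \<le> s \<and> s \<le> t \<longrightarrow>
        (\<forall>x\<in>pm_car V r. pm_map V s t (pm_map V r s x) = pm_map V r t x))"

definition right_closed :: "'a pmod \<Rightarrow> real \<Rightarrow> 'a \<Rightarrow> bool" where
  "right_closed V r v \<longleftrightarrow>
     v \<in> pm_car V r \<and> (\<forall>\<epsilon>>0. pm_map V r (r + \<epsilon>) v = pm_zero V (r + \<epsilon>))"

definition is_submodule :: "'a pmod \<Rightarrow> (real \<Rightarrow> 'a set) \<Rightarrow> bool" where
  "is_submodule V W \<longleftrightarrow>
     (\<forall>r\<ge>0. W r \<subseteq> pm_car V r \<and> pm_zero V r \<in> W r \<and>
        (\<forall>x\<in>W r. \<forall>y\<in>W r. pm_add V r x y \<in> W r) \<and>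
        (\<forall>a. \<forall>x\<in>W r. pm_smult V r a x \<in> W r)) \<and>
     (\<forall>r s. 0 \<le> r \<and> r \<le> s \<longrightarrow> (\<forall>x\<in>W r. pm_map V r s x \<in> W s))"

text \<open>The finite direct sum of interval modules I_[s i, t i), i < n:
  at index r it is the space of rational vectors supported on the intervals
  active at r; structure maps kill the coordinates whose interval has ended.\<close>
definition isum_car :: "nat \<Rightarrow> (nat \<Rightarrow> real) \<Rightarrow> (nat \<Rightarrow> ereal) \<Rightarrow> real \<Rightarrow> (nat \<Rightarrow> rat) set" where
  "isum_car n s t r = {x. \<forall>i. x i \<noteq> 0 \<longrightarrow> i < n \<and> s i \<le> r \<and> ereal r < t i}"

definition isum_map :: "(nat \<Rightarrow> ereal) \<Rightarrow> real \<Rightarrow> (nat \<Rightarrow> rat) \<Rightarrow> (nat \<Rightarrow> rat)" where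
  "isum_map t r' x = (\<lambda>i. if ereal r' < t i then x i else 0)"

definition compact_submodule :: "'a pmod \<Rightarrow> (real \<Rightarrow> 'a set) \<Rightarrow> bool" where
  "compact_submodule V W \<longleftrightarrow> is_submodule V W \<and>
     (\<exists>n s t \<phi>. (\<forall>i<n. 0 \<le> s i \<and> ereal (s i) < t i) \<and>
        (\<forall>r\<ge>0. bij_betw (\<phi> r) (isum_car n s t r) (W r) \<and>
           (\<forall>x\<in>isum_car n s t r. \<forall>y\<in>isum_car n s t r. \<phi> r (\<lambda>i. x i + y i) = pm_add V r (\<phi> r x) (\<phi> r y)) \<and>
           (\<forall>a. \<forall>x\<in>isum_car n s t r. \<phi> r (\<lambda>i. a * x i) = pm_smult V r a (\<phi> r x))) \<and>
        (\<forall>r r'. 0 \<le> r \<and> r \<le> r' \<longrightarrow>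
           (\<forall>x\<in>isum_car n s t r. pm_map V r r' (\<phi> r x) = \<phi> r' (isum_map t r' x))))"

definition locally_compact :: "'a pmod \<Rightarrow> bool" where
  "locally_compact V \<longleftrightarrow>
     (\<forall>r\<ge>0. \<forall>v\<in>pm_car V r. \<exists>W. compact_submodule V W \<and> v \<in> W r)"

end

theory Submission
  imports Defs
begin

lemma qvs_idem:
  assumes "qvs C add z sm" "u \<in> C" "add u u = u"
  shows "u = z"
proof -
  from assms(1) have zC: "z \<in> C" and ass: "\<forall>x\<in>C. \<forall>y\<in>C. \<forall>w\<in>C. add (add x y) w = add x (add y w)"
    and com: "\<forall>x\<in>C. \<forall>y\<in>C. add x y = add y x" and lz: "\<forall>x\<in>C. add z x = x"
    and inv: "\<forall>x\<in>C. \<exists>y\<in>C. add x y = z" unfolding qvs_def by auto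
  obtain w where w: "w \<in> C" "add u w = z" using inv assms(2) by blast
  have "z = add (add u u) w" using w assms(3) by simp
  also have "\<dots> = add u z" using ass assms(2) w by simp
  also have "\<dots> = add z u" using com assms(2) zC by simp
  also have "\<dots> = u" using lz assms(2) by simp
  finally show ?thesis by simp
qed

lemma phi_zero:
  assumes "is_pmod V" "is_submodule V W" "0 \<le> r"
    and bij: "bij_betw (\<phi> r) (isum_car n s t r) (W r)"
    and add: "\<forall>x\<in>isum_car n s t r. \<forall>y\<in>isum_car n s t r. \<phi> r (\<lambda>i. x i + y i) = pm_add V r (\<phi> r x) (\<phi> r y)"
  shows "\<phi> r (\<lambda>i. 0) = pm_zero V r"
proof -
  have z: "(\<lambda>i. 0::rat) \<in> isum_car n s t r" unfolding isum_car_def by simp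
  have "\<phi> r (\<lambda>i. 0) \<in> W r" using bij z by (auto simp: bij_betw_def)
  hence inC: "\<phi> r (\<lambda>i. 0) \<in> pm_car V r" using assms(2,3) unfolding is_submodule_def by blast
  have "pm_add V r (\<phi> r (\<lambda>i. 0)) (\<phi> r (\<lambda>i. 0)) = \<phi> r (\<lambda>i. 0)"
  proof -
    have "\<phi> r (\<lambda>i. 0 + 0) = pm_add V r (\<phi> r (\<lambda>i. 0)) (\<phi> r (\<lambda>i. 0))" using add[rule_format, OF z z] by simp
    thus ?thesis by simp
  qed
  moreover have "qvs (pm_car V r) (pm_add V r) (pm_zero V r) (pm_smult V r)"
    using assms(1,3) unfolding is_pmod_def by blast
  ultimately show ?thesis using qvs_idem[OF _ inC] by blast
qed

theorem mainTheorem17: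
  fixes V :: "'a pmod" and r :: real and v :: 'a
  assumes "is_pmod V"
    and "0 \<le> r"
    and "right_closed V r v"
    and "v \<noteq> pm_zero V r"
  shows "\<not> locally_compact V"
proof
  assume "locally_compact V"
  moreover have vC: "v \<in> pm_car V r" using assms(3) unfolding right_closed_def by blast
  ultimately obtain W where cW: "compact_submodule V W" and vW: "v \<in> W r"
    using assms(2) unfolding locally_compact_def by blast
  from cW have sub: "is_submodule V W" unfolding compact_submodule_def by blast
  from cW[unfolded compact_submodule_def, THEN conjunct2] obtain n s t \<phi> where
    A: "(\<forall>i<n. 0 \<le> s i \<and> ereal (s i) < t i) \<and>
        (\<forall>r\<ge>0. bij_betw (\<phi> r) (isum_car n s t r) (W r) \<and>
           (\<forall>x\<in>isum_car n s t r. \<forall>y\<in>isum_car n s t r. \<phi> r (\<lambda>i. x i + y i) = pm_add V r (\<phi> r x) (\<phi> r y)) \<and>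
           (\<forall>a. \<forall>x\<in>isum_car n s t r. \<phi> r (\<lambda>i. a * x i) = pm_smult V r a (\<phi> r x))) \<and>
        (\<forall>r r'. 0 \<le> r \<and> r \<le> r' \<longrightarrow>
           (\<forall>x\<in>isum_car n s t r. pm_map V r r' (\<phi> r x) = \<phi> r' (isum_map t r' x)))"
    by (elim exE) (rule that)
  have iso: "\<forall>r\<ge>0. bij_betw (\<phi> r) (isum_car n s t r) (W r) \<and>
           (\<forall>x\<in>isum_car n s t r. \<forall>y\<in>isum_car n s t r. \<phi> r (\<lambda>i. x i + y i) = pm_add V r (\<phi> r x) (\<phi> r y))"
    using A by blast
  have nat: "\<forall>r r'. 0 \<le> r \<and> r \<le> r' \<longrightarrow>
           (\<forall>x\<in>isum_car n s t r. pm_map V r r' (\<phi> r x) = \<phi> r' (isum_map t r' x))"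
    using A by blast
  have z: "\<And>q. 0 \<le> q \<Longrightarrow> \<phi> q (\<lambda>i. 0) = pm_zero V q"
    using phi_zero[OF assms(1) sub] iso by blast
  obtain x where x: "x \<in> isum_car n s t r" "\<phi> r x = v"
    proof -
    have "bij_betw (\<phi> r) (isum_car n s t r) (W r)" using iso assms(2) by blast
    then show ?thesis using vW that unfolding bij_betw_def by (metis imageE)
  qed
  have "x \<noteq> (\<lambda>i. 0)" using x z assms(2,4) by blast
  then obtain i where xi: "x i \<noteq> 0" by auto
  hence tr: "ereal r < t i" using x(1) unfolding isum_car_def by blast
  obtain q where q: "r < q" "ereal q < t i" using ereal_dense2[OF tr] by auto
  define e where "e = q - r"
  have e: "e > 0" "r + e = q" using q e_def by auto
  have "pm_map V r (r + e) v = pm_zero V (r + e)" using assms(3) e(1) unfolding right_closed_def by blast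
  hence "pm_map V r q v = pm_zero V q" using e(2) by simp
  moreover have "pm_map V r q v = \<phi> q (isum_map t q x)" using nat x q assms(2) by auto
  ultimately have eq: "\<phi> q (isum_map t q x) = \<phi> q (\<lambda>i. 0)" using z q assms(2) by simp
  have m1: "isum_map t q x \<in> isum_car n s t q" using x(1) q(1)
    unfolding isum_car_def isum_map_def by (auto split: if_splits)
  have m2: "(\<lambda>i. 0::rat) \<in> isum_car n s t q" unfolding isum_car_def by simp
  have "inj_on (\<phi> q) (isum_car n s t q)" using iso q(1) assms(2) by (simp add: bij_betw_def)
  hence "isum_map t q x = (\<lambda>i. 0)" using eq m1 m2 by (meson inj_onD)
  hence "isum_map t q x i = 0" by simp
  thus False using xi q(2) unfolding isum_map_def by simp
qed

end
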